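(* Consider the hybrid system (2.2) where $F$ is defined for all $(h,x)\in[0,r]\times\mathbb{R}^n$. Suppose there exist $\sigma>0$, $\lambda\in(0,1)$ and $a\in K_\infty$ such that $|z(t,z_0)|\le\exp(-\sigma t)a(|z_0|)$ for all $t\ge0$, $z_0\in\mathbb{R}^n$, and $|x(t,x_0;u)|\le\exp(-\lambda\sigma t)a(|x_0|)$ for all $t\ge0$, $x_0\in\mathbb{R}^n$ and all locally bounded $u:\mathbb{R}^+\to\mathbb{R}^+$. Suppose further there is a continuous $L:\mathbb{R}^n\to(0,+\infty)$ such that $|F(h,z)-F(h,x)|\le L(x_0)|z-x|$ for all $x_0\in\mathbb{R}^n$, all $z,x$ with $|x|,|z|\le a(|x_0|)$ and all $h\in[0,\varphi(x)]$. For $x_0$, $u$ given, let $\tau_i,h_i$ be the switching times and step sizes of $x(\cdot,x_0;u)$, let $e(t):=z(t,x_0)-x(t,x_0;u)$, $\tilde d(h,x):=\frac{z(h,x)-x}{h}-F(h,x)$ and $D_i(x_0):=\max_{j=0,\dots,i}|\tilde d(h_j,z(\tau_j,x_0))|$. Then for all $i\ge0$, $$|e(\tau_{i+1})|\le\frac{D_i(x_0)}{L(x_0)}\big(\exp(L(x_0)\tau_{i+1})-1\big)$$ and $$|e(\tau_{i+1})|\le\Big(\frac{D_i(x_0)}{L(x_0)}\Big)^{\frac{\lambda\sigma}{\lambda\sigma+L(x_0)}}\big(2a(|x_0|)\big)^{\frac{L(x_0)}{\lambda\sigma+L(x_0)}}.$$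
   Context: Standing framework: $f$ locally Lipschitz, $f(0)=0$, $z(t,x)$ the solution of $\dot z=f(z)$ with $z(0)=x$. $r>0$, $\varphi:\mathbb{R}^n\to(0,r]$ continuous, $F$ with $F(h,0)=0$, $\lim_{h\to0^+}F(h,x)=f(x)$, and $|F(h,x)|\le|x|M(|x|)$ for a continuous nondecreasing $M$. The hybrid system (2.2): for each locally bounded $u:\mathbb{R}^+\to\mathbb{R}^+$ and $x_0$, $\tau_0=0$, $x(0)=x_0$, $h_i=\varphi(x(\tau_i))\exp(-u(\tau_i))$, $\tau_{i+1}=\tau_i+h_i$, $x(t)=x(\tau_i)+(t-\tau_i)F(h_i,x(\tau_i))$ on $[\tau_i,\tau_{i+1}]$; its solution is $x(t,x_0;u)$. $K_\infty$ is the class of continuous increasing $\rho:\mathbb{R}^+\to\mathbb{R}^+$ with $\rho(0)=0$ and $\rho(s)\to\infty$ as $s\to\infty$. *)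

theory Defs
  imports "HOL-Analysis.Analysis"
begin

definition loc_lipschitz :: "('a::real_normed_vector \<Rightarrow> 'a) \<Rightarrow> bool" where
  "loc_lipschitz f \<longleftrightarrow> (\<forall>x. \<exists>U C. open U \<and> x \<in> U \<and>
      (\<forall>y\<in>U. \<forall>w\<in>U. norm (f y - f w) \<le> C * norm (y - w)))"

definition class_K_inf :: "(real \<Rightarrow> real) \<Rightarrow> bool" where
  "class_K_inf a \<longleftrightarrow> continuous_on {0..} a \<and> strict_mono_on {0..} a \<and> a 0 = 0
      \<and> filterlim a at_top at_top"

definition loc_bounded_input :: "(real \<Rightarrow> real) \<Rightarrow> bool" where
  "loc_bounded_input u \<longleftrightarrow> (\<forall>t\<ge>0. u t \<ge> 0) \<and> (\<forall>T\<ge>0. bounded (u ` {0..T}))"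

text \<open>Hybrid system (2.2): the pair (tau_i, x(tau_i)).\<close>
fun hyb_state :: "('a::real_normed_vector \<Rightarrow> real) \<Rightarrow> (real \<Rightarrow> 'a \<Rightarrow> 'a) \<Rightarrow> (real \<Rightarrow> real)
      \<Rightarrow> 'a \<Rightarrow> nat \<Rightarrow> real \<times> 'a" where
  "hyb_state \<phi> F u x0 0 = (0, x0)"
| "hyb_state \<phi> F u x0 (Suc i) =
     (let (t, x) = hyb_state \<phi> F u x0 i; h = \<phi> x * exp (- u t) in (t + h, x + h *\<^sub>R F h x))"

definition sw_time :: "('a::real_normed_vector \<Rightarrow> real) \<Rightarrow> (real \<Rightarrow> 'a \<Rightarrow> 'a) \<Rightarrow> (real \<Rightarrow> real)
      \<Rightarrow> 'a \<Rightarrow> nat \<Rightarrow> real" where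
  "sw_time \<phi> F u x0 i = fst (hyb_state \<phi> F u x0 i)"

definition sw_pt :: "('a::real_normed_vector \<Rightarrow> real) \<Rightarrow> (real \<Rightarrow> 'a \<Rightarrow> 'a) \<Rightarrow> (real \<Rightarrow> real)
      \<Rightarrow> 'a \<Rightarrow> nat \<Rightarrow> 'a" where
  "sw_pt \<phi> F u x0 i = snd (hyb_state \<phi> F u x0 i)"

definition step_size :: "('a::real_normed_vector \<Rightarrow> real) \<Rightarrow> (real \<Rightarrow> 'a \<Rightarrow> 'a) \<Rightarrow> (real \<Rightarrow> real)
      \<Rightarrow> 'a \<Rightarrow> nat \<Rightarrow> real" where
  "step_size \<phi> F u x0 i = \<phi> (sw_pt \<phi> F u x0 i) * exp (- u (sw_time \<phi> F u x0 i))"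

text \<open>The solution x(t, x0; u) on the interval [tau_i, tau_(i+1)].\<close>
definition hyb_traj :: "('a::real_normed_vector \<Rightarrow> real) \<Rightarrow> (real \<Rightarrow> 'a \<Rightarrow> 'a) \<Rightarrow> (real \<Rightarrow> real)
      \<Rightarrow> 'a \<Rightarrow> nat \<Rightarrow> real \<Rightarrow> 'a" where
  "hyb_traj \<phi> F u x0 i t = sw_pt \<phi> F u x0 i
      + (t - sw_time \<phi> F u x0 i) *\<^sub>R F (step_size \<phi> F u x0 i) (sw_pt \<phi> F u x0 i)"

end

theory Submission
  imports Defs
begin


lemma interp:
  fixes X P B k l T :: real
  assumes X0: "X \<ge> 0" and P0: "P \<ge> 0" and B0: "B \<ge> 0" and l0: "l > 0" and k0: "k > 0" and T0: "T \<ge> 0"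
    and h1: "X \<le> P * (exp (l*T) - 1)" and h2: "X \<le> B * exp (-k*T)"
  shows "X \<le> P powr (k/(k+l)) * B powr (l/(k+l))"
proof (cases "X = 0")
  case True then show ?thesis by simp
next
  case False
  hence Xp: "X > 0" using X0 by simp
  define p where "p = k/(k+l)"
  define q where "q = l/(k+l)"
  have kl: "k + l \<noteq> 0" using k0 l0 by simp
  have pq: "p + q = 1" using kl unfolding p_def q_def by (simp add: add_divide_distrib[symmetric])
  have p0: "p \<ge> 0" "q \<ge> 0" using k0 l0 unfolding p_def q_def by auto
  have "X = X powr (p+q)" using pq Xp by simp
  also have "\<dots> = X powr p * X powr q" by (simp add: powr_add)
  also have "\<dots> \<le> (P * exp (l*T)) powr p * (B * exp (-k*T)) powr q"
  proof (rule mult_mono)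
    have "P * (exp (l*T) - 1) \<le> P * exp (l*T)" using P0 by (simp add: mult_left_mono)
    then have "X \<le> P * exp (l*T)" using h1 by linarith
    then show "X powr p \<le> (P * exp (l*T)) powr p" using powr_mono2[OF p0(1)] X0 by simp
    show "X powr q \<le> (B * exp (-k*T)) powr q" using powr_mono2[OF p0(2)] X0 h2 by simp
  qed auto
  also have "\<dots> = P powr p * B powr q * (exp (l*T) powr p * exp (-k*T) powr q)"
    using P0 B0 by (simp add: powr_mult)
  also have "exp (l*T) powr p * exp (-k*T) powr q = exp (l*T*p - k*T*q)"
    by (simp add: powr_def exp_add[symmetric] algebra_simps)
  also have "l*T*p - k*T*q = 0" unfolding p_def q_def by (simp add: algebra_simps)
  finally show ?thesis unfolding p_def q_def by simp
qed

lemma step_eqs: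
  "sw_time \<phi> F u x0 (Suc j) = sw_time \<phi> F u x0 j + step_size \<phi> F u x0 j"
  "sw_pt \<phi> F u x0 (Suc j) = sw_pt \<phi> F u x0 j + step_size \<phi> F u x0 j *\<^sub>R F (step_size \<phi> F u x0 j) (sw_pt \<phi> F u x0 j)"
  by (auto simp: sw_time_def sw_pt_def step_size_def Let_def split: prod.split)

lemma traj_end: "hyb_traj \<phi> F u x0 j (sw_time \<phi> F u x0 (Suc j)) = sw_pt \<phi> F u x0 (Suc j)"
  "hyb_traj \<phi> F u x0 j (sw_time \<phi> F u x0 j) = sw_pt \<phi> F u x0 j"
  by (auto simp: hyb_traj_def step_eqs)



lemma ode_unique:
  fixes f :: "'a::real_normed_vector \<Rightarrow> 'a" and y1 y2 :: "real \<Rightarrow> 'a"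
  assumes lip: "loc_lipschitz f"
    and d1: "\<And>t. t \<ge> 0 \<Longrightarrow> (y1 has_vector_derivative f (y1 t)) (at t within {0..})"
    and d2: "\<And>t. t \<ge> 0 \<Longrightarrow> (y2 has_vector_derivative f (y2 t)) (at t within {0..})"
    and i: "y1 0 = y2 0"
  shows "\<forall>t\<ge>0. y1 t = y2 t"
proof (rule ccontr)
  assume "\<not> (\<forall>t\<ge>0. y1 t = y2 t)"
  define S where "S = {t. t \<ge> 0 \<and> y1 t \<noteq> y2 t}"
  have Sne: "S \<noteq> {}" using \<open>\<not> _\<close> S_def by auto
  have bdd: "bdd_below S" unfolding S_def by (rule bdd_belowI[of _ 0]) auto
  define s where "s = Inf S"
  have s0: "s \<ge> 0" unfolding s_def using Sne by (intro cInf_greatest) (auto simp: S_def)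
  have below: "y1 t = y2 t" if "0 \<le> t" "t < s" for t
  proof (rule ccontr)
    assume "y1 t \<noteq> y2 t"
    then have "t \<in> S" using that S_def by auto
    then have "s \<le> t" unfolding s_def using bdd by (rule cInf_lower)
    then show False using that by simp
  qed
  have c1: "continuous_on {0..} y1"
    unfolding continuous_on_eq_continuous_within
    using has_vector_derivative_continuous[OF d1] by auto
  have c2: "continuous_on {0..} y2"
    unfolding continuous_on_eq_continuous_within
    using has_vector_derivative_continuous[OF d2] by auto
  define g where "g = (\<lambda>t. y1 t - y2 t)"
  have cg: "continuous_on {0..} g" unfolding g_def using c1 c2 by (intro continuous_intros)
  have ys: "y1 s = y2 s"
  proof (cases "s = 0")
    case True then show ?thesis using i by simp
  next
    case False
    then have sp: "s > 0" using s0 by simp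
    have cl: "closed {t \<in> {0..}. g t = 0}"
      by (rule continuous_closed_preimage_constant[OF cg]) auto
    have sub: "{0..<s} \<subseteq> {t \<in> {0..}. g t = 0}" using below by (auto simp: g_def)
    have "closure {0..<s} \<subseteq> {t \<in> {0..}. g t = 0}" by (rule closure_minimal[OF sub cl])
    moreover have "s \<in> closure {0..<s}" using sp by (simp add: closure_atLeastLessThan)
    ultimately show ?thesis by (auto simp: g_def)
  qed
  have "\<exists>U C. open U \<and> y1 s \<in> U \<and> (\<forall>y\<in>U. \<forall>w\<in>U. norm (f y - f w) \<le> C * norm (y - w))"
    using lip unfolding loc_lipschitz_def by (rule spec)
  then obtain U C where U: "open U" "y1 s \<in> U" and UC: "\<forall>y\<in>U. \<forall>w\<in>U. norm (f y - f w) \<le> C * norm (y - w)"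
    by (elim exE conjE)
  have "(y1 \<longlongrightarrow> y1 s) (at s within {0..})"
    using c1 s0 by (simp add: continuous_on_def)
  then have e1: "eventually (\<lambda>t. y1 t \<in> U) (at s within {0..})"
    using U by (rule topological_tendstoD)
  have "(y2 \<longlongrightarrow> y1 s) (at s within {0..})"
    using c2 s0 ys by (simp add: continuous_on_def)
  then have e2: "eventually (\<lambda>t. y2 t \<in> U) (at s within {0..})"
    using U by (rule topological_tendstoD)
  have "\<exists>d>0. \<forall>t\<in>{0..}. 0 < dist t s \<and> dist t s < d \<longrightarrow> y1 t \<in> U \<and> y2 t \<in> U"
    using eventually_conj[OF e1 e2] unfolding eventually_at by simp
  then obtain d where d: "d > 0" "\<forall>t\<in>{0..}. 0 < dist t s \<and> dist t s < d \<longrightarrow> y1 t \<in> U \<and> y2 t \<in> U"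
    by (elim exE conjE)
  define C' where "C' = \<bar>C\<bar> + 1"
  have C'p: "C' > 0" unfolding C'_def by simp
  define \<delta> where "\<delta> = min (d/2) (1/(2*C'))"
  have \<delta>p: "\<delta> > 0" unfolding \<delta>_def using d C'p by simp
  define K where "K = {s..s+\<delta>}"
  have KU: "y1 t \<in> U \<and> y2 t \<in> U" if "t \<in> K" for t
  proof (cases "t = s")
    case True then show ?thesis using U ys by simp
  next
    case False
    then show ?thesis using that d(2) s0 \<delta>p unfolding K_def \<delta>_def dist_real_def by auto
  qed
  have K0: "K \<subseteq> {0..}" unfolding K_def using s0 by auto
  have "\<exists>x\<in>K. \<forall>y\<in>K. norm (g y) \<le> norm (g x)"
    by (rule continuous_attains_sup) (use \<delta>p continuous_on_subset[OF cg K0] in \<open>auto simp: K_def intro!: continuous_intros\<close>)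
  then obtain tm where tm: "tm \<in> K" "\<And>t. t \<in> K \<Longrightarrow> norm (g t) \<le> norm (g tm)" by blast
  define m where "m = norm (g tm)"
  have bnd: "norm (g t) \<le> \<delta> * (C' * m)" if tK: "t \<in> K" for t
  proof -
    have "norm (g t - g s - (t - s) *\<^sub>R (f (y1 s) - f (y2 s))) \<le> norm (t - s) * (C' * m)"
    proof (rule vector_differentiable_bound_linearization[where S=K])
      fix x assume "x \<in> K"
      then have "x \<ge> 0" using K0 by auto
      then show "(g has_vector_derivative f (y1 x) - f (y2 x)) (at x within K)"
        unfolding g_def using d1 d2 K0
        by (intro has_vector_derivative_diff) (auto intro: has_vector_derivative_within_subset)
    next
      show "closed_segment s t \<subseteq> K" using tK unfolding K_def
        by (auto simp: closed_segment_eq_real_ivl)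
    next
      fix x assume xK: "x \<in> K"
      have "norm (f (y1 x) - f (y2 x)) \<le> C * norm (y1 x - y2 x)" using UC KU[OF xK] by blast
      also have "\<dots> \<le> \<bar>C\<bar> * norm (g x)" by (simp add: g_def abs_mult_pos' mult_right_mono)
      also have "\<dots> \<le> C' * m" unfolding C'_def m_def using tm(2)[OF xK]
        by (intro mult_mono) auto
      finally show "norm (f (y1 x) - f (y2 x) - (f (y1 s) - f (y2 s))) \<le> C' * m" using ys by simp
    next
      show "s \<in> K" unfolding K_def using \<delta>p by simp
    qed
    then have "norm (g t) \<le> norm (t - s) * (C' * m)" using ys by (simp add: g_def)
    also have "\<dots> \<le> \<delta> * (C' * m)" using tK C'p unfolding K_def m_def
      by (intro mult_right_mono) auto
    finally show ?thesis .
  qed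
  have "\<delta> * C' \<le> 1/2" unfolding \<delta>_def using C'p by (simp add: min_def field_simps)
  then have "(\<delta> * C') * m \<le> (1/2) * m" using m_def by (intro mult_right_mono) auto
  moreover have "\<delta> * (C' * m) = (\<delta> * C') * m" by (simp add: mult.assoc)
  ultimately have "m \<le> m/2" using bnd[OF tm(1)] unfolding m_def[symmetric] by linarith
  then have m0: "m \<le> 0" by simp
  have gK: "g t = 0" if "t \<in> K" for t using tm(2)[OF that] m0 m_def by simp
  have "s + \<delta> \<le> s" unfolding s_def
  proof (rule cInf_greatest[OF Sne])
    fix t assume tS: "t \<in> S"
    have "s \<le> t" unfolding s_def using tS bdd by (rule cInf_lower)
    moreover have "g t \<noteq> 0" using tS by (simp add: S_def g_def)
    ultimately show "Inf S + \<delta> \<le> t" using gK unfolding K_def s_def by force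
  qed
  then show False using \<delta>p by simp
qed


lemma flow:
  fixes f :: "'a::real_normed_vector \<Rightarrow> 'a" and z :: "real \<Rightarrow> 'a \<Rightarrow> 'a"
  assumes lip: "loc_lipschitz f" and z_init: "\<forall>x. z 0 x = x"
    and z_ode: "\<forall>x. \<forall>t\<ge>0. ((\<lambda>s. z s x) has_vector_derivative f (z t x)) (at t within {0..})"
    and tau: "\<tau> \<ge> 0" and s: "s \<ge> 0"
  shows "z (\<tau> + s) x0 = z s (z \<tau> x0)"
proof -
  have "\<forall>t\<ge>0. (\<lambda>s. z (\<tau> + s) x0) t = (\<lambda>s. z s (z \<tau> x0)) t"
  proof (rule ode_unique[OF lip])
    fix t :: real assume t: "t \<ge> 0"
    have a1: "((\<lambda>s. \<tau> + s) has_vector_derivative 1) (at t within {0..})"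
      by (auto intro!: derivative_eq_intros simp: has_vector_derivative_def)
    have "((\<lambda>s. z s x0) has_vector_derivative f (z (\<tau> + t) x0)) (at (\<tau> + t) within {0..})"
      using z_ode tau t by simp
    then have a2: "((\<lambda>s. z s x0) has_vector_derivative f (z (\<tau> + t) x0)) (at (\<tau> + t) within (\<lambda>s. \<tau> + s) ` {0..})"
      by (rule has_vector_derivative_within_subset) (use tau in auto)
    show "((\<lambda>s. z (\<tau> + s) x0) has_vector_derivative f (z (\<tau> + t) x0)) (at t within {0..})"
      using vector_diff_chain_within[OF a1 a2] by (simp add: o_def)
  next
    fix t :: real assume t: "t \<ge> 0"
    show "((\<lambda>s. z s (z \<tau> x0)) has_vector_derivative f (z t (z \<tau> x0))) (at t within {0..})"
      using z_ode t by simp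
  qed (use z_init in simp)
  then show ?thesis using s by simp
qed


theorem mainTheorem10:
  fixes f :: "'a::euclidean_space \<Rightarrow> 'a"
    and z :: "real \<Rightarrow> 'a \<Rightarrow> 'a"
    and \<phi> :: "'a \<Rightarrow> real"
    and F :: "real \<Rightarrow> 'a \<Rightarrow> 'a"
    and M :: "real \<Rightarrow> real"
    and r \<sigma> lam :: real
    and a :: "real \<Rightarrow> real"
    and L :: "'a \<Rightarrow> real"
    and u :: "real \<Rightarrow> real"
    and x0 :: 'a
  assumes f_lip: "loc_lipschitz f"
    and f0: "f 0 = 0"
    and z_init: "\<forall>x. z 0 x = x"
    and z_ode: "\<forall>x. \<forall>t\<ge>0. ((\<lambda>s. z s x) has_vector_derivative f (z t x)) (at t within {0..})"
    and r_pos: "r > 0"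
    and \<phi>_cont: "continuous_on UNIV \<phi>"
    and \<phi>_range: "\<forall>x. 0 < \<phi> x \<and> \<phi> x \<le> r"
    and F0: "\<forall>h\<in>{0..r}. F h 0 = 0"
    and F_lim: "\<forall>x. ((\<lambda>h. F h x) \<longlongrightarrow> f x) (at_right 0)"
    and M_cont: "continuous_on {0..} M"
    and M_mono: "mono_on {0..} M"
    and F_bound: "\<forall>h\<in>{0..r}. \<forall>x. norm (F h x) \<le> norm x * M (norm x)"
    and \<sigma>_pos: "\<sigma> > 0"
    and lam_range: "0 < lam" "lam < 1"
    and a_K: "class_K_inf a"
    and z_stab: "\<forall>t\<ge>0. \<forall>z0. norm (z t z0) \<le> exp (- \<sigma> * t) * a (norm z0)"
    and x_stab: "\<forall>v y0. loc_bounded_input v \<longrightarrow> (\<forall>i. \<forall>t\<in>{sw_time \<phi> F v y0 i..sw_time \<phi> F v y0 (Suc i)}.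
        norm (hyb_traj \<phi> F v y0 i t) \<le> exp (- lam * \<sigma> * t) * a (norm y0))"
    and L_cont: "continuous_on UNIV L"
    and L_pos: "\<forall>x. L x > 0"
    and F_lip: "\<forall>y0 zz x h. norm x \<le> a (norm y0) \<longrightarrow> norm zz \<le> a (norm y0) \<longrightarrow> h \<in> {0..\<phi> x} \<longrightarrow>
        norm (F h zz - F h x) \<le> L y0 * norm (zz - x)"
    and u_lb: "loc_bounded_input u"
  shows "\<forall>i. let \<tau> = sw_time \<phi> F u x0; h = step_size \<phi> F u x0;
            e = (\<lambda>t. z t x0 - hyb_traj \<phi> F u x0 i t);
            dt = (\<lambda>hh x. (1 / hh) *\<^sub>R (z hh x - x) - F hh x);
            D = Max ((\<lambda>j. norm (dt (h j) (z (\<tau> j) x0))) ` {0..i})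
         in norm (e (\<tau> (Suc i))) \<le> D / L x0 * (exp (L x0 * \<tau> (Suc i)) - 1)
          \<and> norm (e (\<tau> (Suc i))) \<le> (D / L x0) powr (lam * \<sigma> / (lam * \<sigma> + L x0))
                * (2 * a (norm x0)) powr (L x0 / (lam * \<sigma> + L x0))"
  
proof (intro allI)
  fix i :: nat
  define tau where "tau = sw_time \<phi> F u x0"
  define hs where "hs = step_size \<phi> F u x0"
  define xs where "xs = sw_pt \<phi> F u x0"
  define zs where "zs = (\<lambda>j. z (tau j) x0)"
  define A where "A = a (norm x0)"
  define Lx where "Lx = L x0"
  define dt where "dt = (\<lambda>hh x. (1 / hh) *\<^sub>R (z hh x - x) - F hh x)"
  define d where "d = (\<lambda>j. norm (dt (hs j) (zs j)))"
  define E where "E = (\<lambda>j. norm (zs j - xs j))"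
  have Lp: "Lx > 0" using L_pos Lx_def by simp
  have A0: "A \<ge> 0"
  proof -
    have "norm x0 \<le> A" using z_stab[rule_format, of 0 x0] z_init by (simp add: A_def)
    then show ?thesis using norm_ge_zero order_trans by blast
  qed
  have u0: "\<And>t. t \<ge> 0 \<Longrightarrow> u t \<ge> 0" using u_lb unfolding loc_bounded_input_def by simp
  have tsuc: "\<And>j. tau (Suc j) = tau j + hs j" and xsuc: "\<And>j. xs (Suc j) = xs j + hs j *\<^sub>R F (hs j) (xs j)"
    unfolding tau_def hs_def xs_def by (rule step_eqs)+
  have hpos: "\<And>j. hs j > 0" unfolding hs_def step_size_def using \<phi>_range by simp
  have tnn: "\<And>j. tau j \<ge> 0"
  proof -
    fix j show "tau j \<ge> 0"
    proof (induction j)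
      case 0 show ?case by (simp add: tau_def sw_time_def)
    next
      case (Suc j) show ?case using Suc hpos[of j] by (simp add: tsuc)
    qed
  qed
  have hle: "hs j \<le> \<phi> (xs j)" for j
  proof -
    have "u (tau j) \<ge> 0" using u0 tnn by blast
    then have "exp (- u (tau j)) \<le> 1" by simp
    then show ?thesis unfolding hs_def step_size_def xs_def tau_def[symmetric]
      using \<phi>_range by (simp add: mult_left_le)
  qed
  have zsb: "norm (zs j) \<le> exp (- \<sigma> * tau j) * A" for j
    using z_stab[rule_format, OF tnn[of j]] unfolding zs_def A_def by simp
  have zsA: "norm (zs j) \<le> A" for j
  proof -
    have "exp (- \<sigma> * tau j) \<le> 1" using \<sigma>_pos tnn[of j] by simp
    then have "exp (- \<sigma> * tau j) * A \<le> 1 * A" by (rule mult_right_mono[OF _ A0])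
    then show ?thesis using zsb[of j] by simp
  qed
  have xst: "norm (xs (Suc j)) \<le> exp (- lam * \<sigma> * tau (Suc j)) * A" "norm (xs j) \<le> exp (- lam * \<sigma> * tau j) * A" for j
  proof -
    have H: "\<forall>i. \<forall>t\<in>{sw_time \<phi> F u x0 i..sw_time \<phi> F u x0 (Suc i)}.
        norm (hyb_traj \<phi> F u x0 i t) \<le> exp (- lam * \<sigma> * t) * a (norm x0)"
      using mp[OF spec[OF spec[OF x_stab, of u], of x0] u_lb] .
    have st: "\<forall>t\<in>{tau j..tau (Suc j)}. norm (hyb_traj \<phi> F u x0 j t) \<le> exp (- lam * \<sigma> * t) * A"
      using spec[OF H, of j] unfolding tau_def A_def .
    have le: "tau j \<le> tau (Suc j)" using tsuc hpos[of j] by simp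
    have m1: "tau (Suc j) \<in> {tau j..tau (Suc j)}" "tau j \<in> {tau j..tau (Suc j)}" using le by auto
    show "norm (xs (Suc j)) \<le> exp (- lam * \<sigma> * tau (Suc j)) * A"
      using bspec[OF st m1(1)] traj_end(1)[of \<phi> F u x0 j] unfolding tau_def xs_def by simp
    show "norm (xs j) \<le> exp (- lam * \<sigma> * tau j) * A"
      using bspec[OF st m1(2)] traj_end(2)[of \<phi> F u x0 j] unfolding tau_def xs_def by simp
  qed
  have xsA: "norm (xs j) \<le> A" for j
  proof -
    have "exp (- lam * \<sigma> * tau j) \<le> 1" using \<sigma>_pos lam_range tnn[of j] by simp
    then have "exp (- lam * \<sigma> * tau j) * A \<le> 1 * A" by (rule mult_right_mono[OF _ A0])
    then show ?thesis using xst(2)[of j] by simp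
  qed
  have zflow: "zs (Suc j) = z (hs j) (zs j)" for j
    unfolding zs_def tsuc using flow[OF f_lip z_init z_ode tnn[of j] less_imp_le[OF hpos[of j]]] by simp
  have rec: "E (Suc j) \<le> (1 + hs j * Lx) * E j + hs j * d j" for j
  proof -
    let ?h = "hs j"
    have eq: "zs (Suc j) - xs (Suc j) = (zs j - xs j) + ?h *\<^sub>R (F ?h (zs j) - F ?h (xs j)) + ?h *\<^sub>R dt ?h (zs j)"
      using hpos[of j] unfolding zflow xsuc dt_def by (simp add: algebra_simps)
    have lipj: "norm (F ?h (zs j) - F ?h (xs j)) \<le> Lx * norm (zs j - xs j)"
      using F_lip zsA xsA hle hpos[of j] unfolding A_def Lx_def by (simp add: less_imp_le)
    have "E (Suc j) \<le> norm (zs j - xs j) + norm (?h *\<^sub>R (F ?h (zs j) - F ?h (xs j))) + norm (?h *\<^sub>R dt ?h (zs j))"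
      unfolding E_def eq by (rule order_trans[OF norm_triangle_ineq add_right_mono[OF norm_triangle_ineq]])
    also have "\<dots> = E j + ?h * norm (F ?h (zs j) - F ?h (xs j)) + ?h * d j"
      using hpos[of j] by (simp add: E_def d_def)
    also have "\<dots> \<le> E j + ?h * (Lx * E j) + ?h * d j"
      using lipj hpos[of j] unfolding E_def by (simp add: mult_left_mono)
    finally show ?thesis by (simp add: algebra_simps)
  qed
  have E0: "E 0 = 0" unfolding E_def zs_def xs_def tau_def using z_init
    by (simp add: sw_time_def sw_pt_def)
  have gron: "\<And>D. 0 \<le> D \<Longrightarrow> (\<forall>j<n. d j \<le> D) \<Longrightarrow> E n \<le> D / Lx * (exp (Lx * tau n) - 1)" for n
  proof (induction n)
    case 0 then show ?case using E0 by (simp add: tau_def sw_time_def)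
  next
    case (Suc n)
    define P where "P = D / Lx"
    have P0: "P \<ge> 0" using Suc.prems Lp P_def by simp
    have IH: "E n \<le> P * (exp (Lx * tau n) - 1)" using Suc P_def by simp
    have dn: "d n \<le> D" using Suc.prems by simp
    have h0: "hs n > 0" by (rule hpos)
    have "E (Suc n) \<le> (1 + hs n * Lx) * E n + hs n * d n" by (rule rec)
    also have "\<dots> \<le> (1 + hs n * Lx) * (P * (exp (Lx * tau n) - 1)) + hs n * (P * Lx)"
      using IH dn h0 Lp P_def by (intro add_mono mult_left_mono) auto
    also have "\<dots> = P * ((1 + hs n * Lx) * exp (Lx * tau n) - 1)" by (simp add: algebra_simps)
    also have "\<dots> \<le> P * (exp (hs n * Lx) * exp (Lx * tau n) - 1)"
      using P0 exp_ge_add_one_self[of "hs n * Lx"] by (intro mult_left_mono) (auto intro: mult_right_mono)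
    also have "\<dots> = P * (exp (Lx * tau (Suc n)) - 1)"
      by (simp add: tsuc exp_add[symmetric] algebra_simps)
    finally show ?case using P_def by simp
  qed
  define D where "D = Max ((\<lambda>j. d j) ` {0..i})"
  have Dge: "\<forall>j<Suc i. d j \<le> D" unfolding D_def by (auto intro: Max_ge)
  have D0: "D \<ge> 0" using Dge[rule_format, of 0] unfolding d_def by (meson norm_ge_zero order_trans zero_less_Suc)
  have b1: "E (Suc i) \<le> D / Lx * (exp (Lx * tau (Suc i)) - 1)" by (rule gron[OF D0 Dge])
  have "E (Suc i) \<le> norm (zs (Suc i)) + norm (xs (Suc i))" unfolding E_def by (rule norm_triangle_ineq4)
  also have "\<dots> \<le> exp (- \<sigma> * tau (Suc i)) * A + exp (- lam * \<sigma> * tau (Suc i)) * A"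
    using zsb xst(1) by (rule add_mono)
  also have "\<dots> \<le> (2 * A) * exp (- (lam * \<sigma>) * tau (Suc i))"
  proof -
    have "exp (- \<sigma> * tau (Suc i)) \<le> exp (- lam * \<sigma> * tau (Suc i))"
      using lam_range \<sigma>_pos tnn[of "Suc i"] by (simp add: mult_right_mono)
    then have "exp (- \<sigma> * tau (Suc i)) * A \<le> exp (- lam * \<sigma> * tau (Suc i)) * A" by (rule mult_right_mono[OF _ A0])
    then show ?thesis by (simp add: algebra_simps)
  qed
  finally have b2: "E (Suc i) \<le> (2 * A) * exp (- (lam * \<sigma>) * tau (Suc i))" .
  have b3: "E (Suc i) \<le> (D / Lx) powr (lam * \<sigma> / (lam * \<sigma> + Lx)) * (2 * A) powr (Lx / (lam * \<sigma> + Lx))"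
    by (rule interp[OF _ _ _ Lp _ tnn b1 b2]) (use D0 Lp A0 lam_range \<sigma>_pos E_def in auto)
  have eqe: "z (tau (Suc i)) x0 - hyb_traj \<phi> F u x0 i (tau (Suc i)) = zs (Suc i) - xs (Suc i)"
    unfolding zs_def xs_def tau_def by (simp add: traj_end)
  have fin: "norm (z (sw_time \<phi> F u x0 (Suc i)) x0 - hyb_traj \<phi> F u x0 i (sw_time \<phi> F u x0 (Suc i))) = E (Suc i)"
    using eqe unfolding E_def tau_def by simp
  have deq: "Max ((\<lambda>j. norm ((1 / step_size \<phi> F u x0 j) *\<^sub>R (z (step_size \<phi> F u x0 j) (z (sw_time \<phi> F u x0 j) x0) - z (sw_time \<phi> F u x0 j) x0) - F (step_size \<phi> F u x0 j) (z (sw_time \<phi> F u x0 j) x0))) ` {0..i}) = D"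
    unfolding D_def d_def dt_def hs_def zs_def tau_def ..
  show "let \<tau> = sw_time \<phi> F u x0; h = step_size \<phi> F u x0;
            e = (\<lambda>t. z t x0 - hyb_traj \<phi> F u x0 i t);
            dt = (\<lambda>hh x. (1 / hh) *\<^sub>R (z hh x - x) - F hh x);
            D = Max ((\<lambda>j. norm (dt (h j) (z (\<tau> j) x0))) ` {0..i})
         in norm (e (\<tau> (Suc i))) \<le> D / L x0 * (exp (L x0 * \<tau> (Suc i)) - 1)
          \<and> norm (e (\<tau> (Suc i))) \<le> (D / L x0) powr (lam * \<sigma> / (lam * \<sigma> + L x0))
                * (2 * a (norm x0)) powr (L x0 / (lam * \<sigma> + L x0))"
    unfolding Let_def
  proof (simp only: fin deq, intro conjI)
    show "E (Suc i) \<le> D / L x0 * (exp (L x0 * sw_time \<phi> F u x0 (Suc i)) - 1)"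
      using b1 unfolding Lx_def tau_def .
    show "E (Suc i) \<le> (D / L x0) powr (lam * \<sigma> / (lam * \<sigma> + L x0)) * (2 * a (norm x0)) powr (L x0 / (lam * \<sigma> + L x0))"
      using b3 unfolding Lx_def A_def .
  qed
qed

end
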